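(* Let $I\subseteq R$ be a good ideal and let $Q\in\mathbb N$. Then there exists an integer $L(Q)$ such that for every $l\ge L(Q)$ and every $m\in G(I^l)$ there is an index $i\in\{1,\dots,n\}$ with $m=m'\mu_i^Q$ for some $m'\in G(I^{l-Q})$.
   Context: Let $\mathbb K$ be a field, $R=\mathbb K[x_1,\dots,x_n]$, $\mathfrak m=\langle x_1,\dots,x_n\rangle$, $\mathbb N=\{0,1,2,\dots\}$. A monomial $x_1^{\alpha_1}\cdots x_n^{\alpha_n}$ is identified with the point $(\alpha_1,\dots,\alpha_n)\in\mathbb N^n$. For a monomial ideal $I$, $G(I)$ denotes its (unique) minimal monomial generating set. If $I$ is an $\mathfrak m$-primary monomial ideal, then for each $i$ there is a unique $d_i\ge1$ with $x_i^{d_i}\in G(I)$; write $\mu_i=x_i^{d_i}$. For $(a_1,\dots,a_n)\in\mathbb N^n$ the box associated to $I$ is $B_{a_1,\dots,a_n}=([a_1d_1,(a_1+1)d_1]\times\cdots\times[a_nd_n,(a_n+1)d_n])\cap\mathbb N^n$; a monomial belongs to a box if its exponent vector does. An $\mathfrak m$-primary monomial ideal $I$ is called good if for every integer $l\ge1$, every element of $G(I^l)$ belongs to some box $B_{a_1,\dots,a_n}$ with $a_1+\dots+a_n=l-1$. *)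

theory Defs
  imports Main "HOL-Library.Function_Algebras"
begin

text \<open>Monomials of R = K[x_1,...,x_n] are identified with exponent vectors
  'v \<Rightarrow> nat, where the finite type 'v indexes the variables x_1,...,x_n.
  A monomial ideal is identified with the set of (exponent vectors of) monomials
  it contains; this is an upward closed set w.r.t. divisibility, which is the
  pointwise order on exponent vectors.\<close>

definition mono_ideal :: "('v \<Rightarrow> nat) set \<Rightarrow> bool" where
  "mono_ideal I \<longleftrightarrow> (\<forall>a\<in>I. \<forall>b. a \<le> b \<longrightarrow> b \<in> I)"

definition gens :: "('v \<Rightarrow> nat) set \<Rightarrow> ('v \<Rightarrow> nat) set" where
  "gens I = {a \<in> I. \<forall>b\<in>I. b \<le> a \<longrightarrow> b = a}"

definition ideal_prod :: "('v \<Rightarrow> nat) set \<Rightarrow> ('v \<Rightarrow> nat) set \<Rightarrow> ('v \<Rightarrow> nat) set" where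
  "ideal_prod I J = {c. \<exists>a\<in>I. \<exists>b\<in>J. a + b \<le> c}"

fun ideal_pow :: "('v \<Rightarrow> nat) set \<Rightarrow> nat \<Rightarrow> ('v \<Rightarrow> nat) set" where
  "ideal_pow I 0 = UNIV"
| "ideal_pow I (Suc l) = ideal_prod I (ideal_pow I l)"

definition ppow :: "'v \<Rightarrow> nat \<Rightarrow> ('v \<Rightarrow> nat)" where
  "ppow i d = (\<lambda>j. if j = i then d else 0)"

definition m_primary :: "('v \<Rightarrow> nat) set \<Rightarrow> bool" where
  "m_primary I \<longleftrightarrow> mono_ideal I \<and> 0 \<notin> I \<and> (\<forall>i. \<exists>d. ppow i d \<in> I)"

text \<open>d_i: the unique d with x_i^d in G(I), i.e. the least d with x_i^d in I.\<close>
definition pdeg :: "('v \<Rightarrow> nat) set \<Rightarrow> 'v \<Rightarrow> nat" where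
  "pdeg I i = (LEAST d. ppow i d \<in> I)"

definition mu :: "('v \<Rightarrow> nat) set \<Rightarrow> 'v \<Rightarrow> ('v \<Rightarrow> nat)" where
  "mu I i = ppow i (pdeg I i)"

definition in_box :: "('v \<Rightarrow> nat) set \<Rightarrow> ('v \<Rightarrow> nat) \<Rightarrow> ('v \<Rightarrow> nat) \<Rightarrow> bool" where
  "in_box I a m \<longleftrightarrow> (\<forall>i. a i * pdeg I i \<le> m i \<and> m i \<le> (a i + 1) * pdeg I i)"

definition good :: "('v::finite \<Rightarrow> nat) set \<Rightarrow> bool" where
  "good I \<longleftrightarrow> m_primary I \<and>
     (\<forall>l\<ge>1. \<forall>m\<in>gens (ideal_pow I l). \<exists>a. (\<Sum>i\<in>UNIV. a i) = l - 1 \<and> in_box I a m)"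

end

theory Submission
  imports Defs "HOL-Library.FuncSet"
begin

lemma pow_up: "x \<in> ideal_pow I a \<Longrightarrow> x \<le> y \<Longrightarrow> y \<in> ideal_pow I a"
  by (cases a) (auto simp: ideal_prod_def intro: order_trans)

lemma pow_add: "x \<in> ideal_pow I a \<Longrightarrow> y \<in> ideal_pow I b \<Longrightarrow> x + y \<in> ideal_pow I (a+b)"
proof (induction a arbitrary: x)
  case 0
  then show ?case by (auto intro: pow_up simp: le_fun_def)
next
  case (Suc a)
  then obtain g z where g: "g \<in> I" "z \<in> ideal_pow I a" "g + z \<le> x"
    by (auto simp: ideal_prod_def)
  have "z + y \<in> ideal_pow I (a+b)" using Suc.IH[OF g(2)] Suc.prems(2) by blast
  moreover have "g + (z + y) \<le> x + y" using g(3) by (auto simp: le_fun_def)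
  ultimately have "x + y \<in> ideal_prod I (ideal_pow I (a+b))"
    unfolding ideal_prod_def using g(1) by blast
  then show ?case by (simp only: add_Suc ideal_pow.simps)
qed

lemma pow_Suc_down: "x \<in> ideal_pow I (Suc k) \<Longrightarrow> x \<in> ideal_pow I k"
proof -
  assume "x \<in> ideal_pow I (Suc k)"
  then obtain g z where g: "g \<in> I" "z \<in> ideal_pow I k" "g + z \<le> x"
    by (auto simp: ideal_prod_def)
  have "z \<le> x" using g(3) by (auto simp: le_fun_def elim: add_leE)
  thus ?thesis using g pow_up by blast
qed

lemma pow_anti: "a \<le> b \<Longrightarrow> x \<in> ideal_pow I b \<Longrightarrow> x \<in> ideal_pow I a"
proof -
  assume "a \<le> b" "x \<in> ideal_pow I b"
  then obtain k where "b = a + k" by (metis le_add_diff_inverse)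
  with \<open>x \<in> ideal_pow I b\<close> show ?thesis
  proof (induction k arbitrary: b)
    case 0 then show ?case by simp
  next
    case (Suc k) then show ?case using pow_Suc_down by (metis add_Suc_right)
  qed
qed

lemma pow_scale: "g \<in> I \<Longrightarrow> (\<lambda>j. k * g j) \<in> ideal_pow I k"
proof (induction k)
  case 0 then show ?case by simp
next
  case (Suc k)
  have "g + (\<lambda>j. k * g j) \<le> (\<lambda>j. Suc k * g j)" by (auto simp: le_fun_def)
  then show ?case using Suc by (auto simp: ideal_prod_def)
qed

lemma pow_sum_pw:
  assumes "finite S" "\<forall>s\<in>S. f s \<in> ideal_pow I (a s)"
  shows "(\<lambda>j. \<Sum>s\<in>S. f s j) \<in> ideal_pow I (\<Sum>s\<in>S. a s)"
  using assms
proof (induction S rule: finite_induct)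
  case empty then show ?case by simp
next
  case (insert x F)
  have "f x + (\<lambda>j. \<Sum>s\<in>F. f s j) \<in> ideal_pow I (a x + (\<Sum>s\<in>F. a s))"
    using insert by (intro pow_add) auto
  moreover have "f x + (\<lambda>j. \<Sum>s\<in>F. f s j) = (\<lambda>j. \<Sum>s\<in>insert x F. f s j)"
    using insert by (auto simp: fun_eq_iff)
  ultimately show ?case using insert by simp
qed

lemma pow_list: "m \<in> ideal_pow I l \<Longrightarrow> \<exists>xs. length xs = l \<and> set xs \<subseteq> I \<and> (\<forall>j. (\<Sum>x\<leftarrow>xs. x j) \<le> m j)"
proof (induction l arbitrary: m)
  case 0 then show ?case by simp
next
  case (Suc l)
  then obtain g z where g: "g \<in> I" "z \<in> ideal_pow I l" "g + z \<le> m"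
    by (auto simp: ideal_prod_def)
  then obtain xs where xs: "length xs = l" "set xs \<subseteq> I" "\<forall>j. (\<Sum>x\<leftarrow>xs. x j) \<le> z j"
    using Suc by blast
  have "\<forall>j. (\<Sum>x\<leftarrow>g#xs. x j) \<le> m j"
  proof
    fix j
    have "g j + z j \<le> m j" using g(3) by (auto simp: le_fun_def)
    then show "(\<Sum>x\<leftarrow>g#xs. x j) \<le> m j" using xs(3)[rule_format, of j] by simp
  qed
  then show ?case using xs g by (intro exI[of _ "g#xs"]) auto
qed

lemma gens_exists:
  fixes J :: "('v::finite \<Rightarrow> nat) set"
  assumes "u \<in> J" shows "\<exists>g\<in>gens J. g \<le> u"
proof -
  obtain g where g: "g \<in> J \<and> g \<le> u" "\<forall>y. y \<in> J \<and> y \<le> u \<longrightarrow> sum g UNIV \<le> sum y UNIV"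
    using ex_has_least_nat[of "\<lambda>v. v \<in> J \<and> v \<le> u" u "\<lambda>v. sum v UNIV"] assms by auto
  have "g \<in> gens J"
    unfolding gens_def
  proof (safe)
    show "g \<in> J" using g by auto
    fix b assume b: "b \<in> J" "b \<le> g"
    show "b = g"
    proof (rule ccontr)
      assume "b \<noteq> g"
      then obtain j where "b j \<noteq> g j" by auto
      with b(2) have "b j < g j" by (simp add: le_fun_def order_less_le)
      then have "sum b UNIV < sum g UNIV"
        using b(2) by (intro sum_strict_mono_ex1) (auto simp: le_fun_def)
      moreover have "b \<le> u" using b g order_trans by blast
      ultimately show False using g b by force
    qed
  qed
  then show ?thesis using g by auto
qed

lemma finite_bounded: "finite {g::'v::finite \<Rightarrow> nat. \<forall>j. g j \<le> d j}"
proof -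
  have "{g::'v::finite \<Rightarrow> nat. \<forall>j. g j \<le> d j} \<subseteq> PiE UNIV (\<lambda>j. {..d j})"
    by (auto simp: PiE_def Pi_def)
  then show ?thesis by (rule finite_subset) (intro finite_PiE, auto)
qed

theorem mainTheorem9:
  fixes I :: "('v::finite \<Rightarrow> nat) set" and Q :: nat
  assumes "good I"
  shows "\<exists>L::nat. \<forall>l\<ge>L. \<forall>m\<in>gens (ideal_pow I l).
           \<exists>i. \<exists>m'\<in>gens (ideal_pow I (l - Q)). m = m' + (\<lambda>j. Q * mu I i j)"
proof -
  from assms have mono: "mono_ideal I" and z: "0 \<notin> I" and ex: "\<forall>i. \<exists>d. ppow i d \<in> I"
    and gd: "\<forall>l\<ge>1. \<forall>m\<in>gens (ideal_pow I l). \<exists>a. (\<Sum>i\<in>UNIV. a i) = l - 1 \<and> in_box I a m"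
    by (auto simp: good_def m_primary_def)
  define d where "d = pdeg I"
  have pin: "ppow i (d i) \<in> I" for i
    using ex unfolding d_def pdeg_def by (metis LeastI_ex)
  have dpos: "d i > 0" for i
  proof (rule ccontr)
    assume "\<not> d i > 0"
    then have "ppow i (d i) = 0" by (auto simp: ppow_def fun_eq_iff)
    then show False using pin[of i] z by simp
  qed
  define D where "D = (\<Prod>i\<in>UNIV. d i)"
  have Dpos: "D > 0" unfolding D_def using dpos by (simp add: prod_pos)
  have dD: "D div d i * d i = D" for i
  proof -
    have "d i dvd D" unfolding D_def by (rule dvd_prodI) auto
    then show ?thesis by simp
  qed
  define W where "W u = (\<Sum>j\<in>UNIV. u j * (D div d j))" for u :: "'v \<Rightarrow> nat"
  have WI: "W u \<ge> D" if u: "u \<in> I" for u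
  proof -
    define k where "k = D + 1"
    have "(\<lambda>j. k * u j) \<in> ideal_pow I k" by (rule pow_scale[OF u])
    then obtain g where g: "g \<in> gens (ideal_pow I k)" "g \<le> (\<lambda>j. k * u j)"
      using gens_exists by blast
    then obtain a where a: "(\<Sum>i\<in>UNIV. a i) = k - 1" "in_box I a g"
      using gd[rule_format, OF _ g(1)] unfolding k_def by (meson le_add2)
    have "D * (k - 1) = (\<Sum>j\<in>UNIV. a j * d j * (D div d j))"
      unfolding a(1)[symmetric] sum_distrib_left using dD by (simp add: mult.commute mult.left_commute)
    also have "\<dots> \<le> W g" unfolding W_def
      using a(2) by (intro sum_mono mult_right_mono) (auto simp: in_box_def d_def)
    also have "\<dots> \<le> (\<Sum>j\<in>UNIV. (k * u j) * (D div d j))" unfolding W_def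
      using g(2) by (intro sum_mono mult_right_mono) (auto simp: le_fun_def)
    also have "\<dots> = k * W u" unfolding W_def by (simp add: sum_distrib_left mult.assoc)
    finally have *: "D * D \<le> (D + 1) * W u" by (simp add: k_def)
    show ?thesis
    proof (rule ccontr)
      assume "\<not> D \<le> W u"
      then have "W u + 1 \<le> D" by simp
      then have "(D + 1) * (W u + 1) \<le> (D + 1) * D" by (rule mult_le_mono2)
      then show False using * by (simp add: algebra_simps)
    qed
  qed
  define n where "n = card (UNIV :: 'v set)"
  have npos: "n > 0" unfolding n_def by (simp add: card_gt_0_iff)
  define T where "T = {g \<in> I. \<forall>j. g j \<le> d j}"
  have finT: "finite T" unfolding T_def
    by (rule finite_subset[OF _ finite_bounded[of d]]) auto
  define L where "L = card T * D + n * Q"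
  show ?thesis
  proof (intro exI[of _ L] allI impI ballI)
    fix l m assume l: "L \<le> l" and m: "m \<in> gens (ideal_pow I l)"
    from m have mI: "m \<in> ideal_pow I l" and mmin: "\<forall>b\<in>ideal_pow I l. b \<le> m \<longrightarrow> b = m"
      by (auto simp: gens_def)
    obtain xs where xs: "length xs = l" "set xs \<subseteq> I" "\<forall>j. (\<Sum>x\<leftarrow>xs. x j) \<le> m j"
      using pow_list[OF mI] by blast
    define tr where "tr x = (\<lambda>j. min (x j) (d j))" for x :: "'v \<Rightarrow> nat"
    have trT: "tr x \<in> T" if x: "x \<in> I" for x
    proof -
      have bd: "\<forall>i. tr x i \<le> d i" by (simp add: tr_def)
      have "tr x \<in> I"
      proof (cases "\<exists>j. d j \<le> x j")
        case True
        then obtain j where j: "d j \<le> x j" by blast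
        have le: "ppow j (d j) \<le> tr x" unfolding le_fun_def ppow_def tr_def using j by simp
        show ?thesis using mono pin le unfolding mono_ideal_def by blast
      next
        case False
        have "tr x = x"
        proof (rule ext)
          fix i
          have "\<not> d i \<le> x i" using False by blast
          then show "tr x i = x i" by (simp add: tr_def)
        qed
        then show ?thesis using x by simp
      qed
      then show ?thesis using bd unfolding T_def by blast
    qed
    define ys where "ys = map tr xs"
    have ysT: "set ys \<subseteq> T" using xs(2) trT by (auto simp: ys_def)
    define c where "c g = count_list ys g" for g
    have csum: "(\<Sum>g\<in>T. c g) = l"
      using sum_count_set[OF ysT finT] xs(1) by (simp add: c_def ys_def)
    have mge: "(\<Sum>g\<in>T. c g * g j) \<le> m j" for j
    proof -
      have "(\<Sum>g\<in>T. c g * g j) = (\<Sum>x\<leftarrow>ys. x j)"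
        using sum_list_map_eq_sum_count2[OF ysT finT, of "\<lambda>x. x j"] by (simp add: c_def)
      also have "\<dots> = (\<Sum>x\<leftarrow>xs. tr x j)" by (simp add: ys_def o_def)
      also have "\<dots> \<le> (\<Sum>x\<leftarrow>xs. x j)" by (intro sum_list_mono) (simp add: tr_def)
      also have "\<dots> \<le> m j" using xs(3) by blast
      finally show ?thesis .
    qed
    define q where "q g = c g div D" for g
    define r where "r g = c g mod D" for g
    define e where "e j = (\<Sum>g\<in>T. q g * (D div d j) * g j)" for j
    have decomp: "(\<Sum>g\<in>T. c g * g j) = (\<Sum>g\<in>T. r g * g j) + e j * d j" for j
    proof -
      have "e j * d j = (\<Sum>g\<in>T. q g * D * g j)"
        unfolding e_def sum_distrib_right
        by (intro sum.cong refl) (metis dD mult.assoc mult.commute)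
      moreover have "c g * g j = r g * g j + q g * D * g j" for g
        unfolding r_def q_def by (metis add_mult_distrib mod_div_mult_eq)
      ultimately show ?thesis by (simp add: sum.distrib)
    qed
    have esum: "D * (\<Sum>g\<in>T. q g) \<le> (\<Sum>j\<in>UNIV. e j)"
    proof -
      have "(\<Sum>j\<in>UNIV. e j) = (\<Sum>g\<in>T. q g * W g)"
        unfolding e_def W_def sum_distrib_left
        by (subst sum.swap) (simp add: mult_ac)
      also have "\<dots> \<ge> (\<Sum>g\<in>T. q g * D)"
        using WI T_def by (intro sum_mono mult_left_mono) auto
      finally show ?thesis by (simp add: sum_distrib_left mult.commute)
    qed
    have rsum: "(\<Sum>g\<in>T. r g) \<le> card T * D"
      using sum_bounded_above[of T r D] Dpos by (simp add: r_def less_imp_le)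
    have total: "l \<le> (\<Sum>g\<in>T. r g) + (\<Sum>j\<in>UNIV. e j)"
    proof -
      have "l = (\<Sum>g\<in>T. r g + D * q g)"
        unfolding csum[symmetric] r_def q_def by (intro sum.cong refl) (metis mod_mult_div_eq add.commute)
      also have "\<dots> = (\<Sum>g\<in>T. r g) + D * (\<Sum>g\<in>T. q g)"
        by (simp add: sum.distrib sum_distrib_left)
      finally show ?thesis using esum by linarith
    qed
    obtain i where imax: "\<And>j. e j \<le> e i"
    proof -
      have "Max (range e) \<in> range e" by (intro Max_in) auto
      then obtain i where "e i = Max (range e)" by (metis imageE)
      then show ?thesis using that by (metis Max_ge finite UNIV_I finite_imageI image_eqI)
    qed
    have "(\<Sum>j\<in>UNIV. e j) \<le> n * e i"
      using sum_bounded_above[of UNIV e "e i"] imax by (simp add: n_def)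
    then have "n * Q \<le> n * e i" using total rsum l unfolding L_def by linarith
    then have eiQ: "Q \<le> e i" using npos by (meson nat_mult_le_cancel_disj not_gr0)
    have "Q \<le> n * Q" using npos by simp
    then have Ql: "Q \<le> l" using l unfolding L_def by linarith
    define e' where "e' = e(i := e i - Q)"
    define A where "A = (\<lambda>j. \<Sum>g\<in>T. r g * g j)"
    have Amem: "A \<in> ideal_pow I (\<Sum>g\<in>T. r g)" unfolding A_def
      using finT by (intro pow_sum_pw) (auto intro: pow_scale simp: T_def)
    have Eeq: "(\<lambda>j. \<Sum>k\<in>UNIV. e' k * ppow k (d k) j) = (\<lambda>j. e' j * d j)"
      by (auto simp: ppow_def fun_eq_iff if_distrib cong: if_cong)
    have Emem: "(\<lambda>j. e' j * d j) \<in> ideal_pow I (\<Sum>j\<in>UNIV. e' j)"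
      unfolding Eeq[symmetric] by (intro pow_sum_pw) (auto intro: pow_scale pin)
    have e'sum: "(\<Sum>j\<in>UNIV. e' j) + Q = (\<Sum>j\<in>UNIV. e j)"
    proof -
      have "(\<Sum>j\<in>UNIV. e j) = e i + (\<Sum>j\<in>UNIV - {i}. e j)" by (simp add: sum.remove)
      moreover have "(\<Sum>j\<in>UNIV. e' j) = e' i + (\<Sum>j\<in>UNIV - {i}. e' j)" by (simp add: sum.remove)
      moreover have "(\<Sum>j\<in>UNIV - {i}. e' j) = (\<Sum>j\<in>UNIV - {i}. e j)"
        by (intro sum.cong) (auto simp: e'_def)
      ultimately show ?thesis using eiQ by (simp add: e'_def)
    qed
    have sumM: "A + (\<lambda>j. e' j * d j) \<in> ideal_pow I (l - Q)"
      using pow_add[OF Amem Emem] e'sum total by (intro pow_anti[of "l - Q"]) auto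
    define m' where "m' = (\<lambda>j. m j - Q * mu I i j)"
    have mu_i: "mu I i = ppow i (d i)" by (simp add: mu_def d_def)
    have mA: "A j + e j * d j \<le> m j" for j using mge[of j] decomp[of j] by (simp add: A_def)
    have Qd: "Q * d i \<le> e i * d i" using eiQ by simp
    have m'ge: "A + (\<lambda>j. e' j * d j) \<le> m'"
    unfolding le_fun_def
    proof
      fix j
      have "A j + e' j * d j \<le> m j - Q * (if j = i then d i else 0)"
      proof (cases "j = i")
        case True
        have "(e i - Q) * d i = e i * d i - Q * d i" by (simp add: diff_mult_distrib)
        then show ?thesis using True mA[of i] Qd by (simp add: e'_def)
      next
        case False then show ?thesis using mA[of j] by (simp add: e'_def)
      qed
      then show "(A + (\<lambda>j. e' j * d j)) j \<le> m' j" by (simp add: m'_def mu_i ppow_def)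
    qed
    have m'mem: "m' \<in> ideal_pow I (l - Q)" using pow_up[OF sumM m'ge] .
    have mdec: "m = m' + (\<lambda>j. Q * mu I i j)"
    proof (rule ext)
      fix j
      have "Q * mu I i j \<le> m j"
      proof -
        have "Q * d i \<le> m i" using mA[of i] Qd by linarith
        then show ?thesis by (simp add: mu_i ppow_def)
      qed
      then show "m j = (m' + (\<lambda>j. Q * mu I i j)) j" by (simp add: m'_def)
    qed
    have Qmu: "(\<lambda>j. Q * mu I i j) \<in> ideal_pow I Q" unfolding mu_i by (intro pow_scale pin)
    have m'gen: "m' \<in> gens (ideal_pow I (l - Q))"
      unfolding gens_def
    proof (safe)
      show "m' \<in> ideal_pow I (l - Q)" by (rule m'mem)
      fix b assume b: "b \<in> ideal_pow I (l - Q)" "b \<le> m'"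
      have "b + (\<lambda>j. Q * mu I i j) \<in> ideal_pow I l"
        using pow_add[OF b(1) Qmu] Ql by simp
      moreover have "b + (\<lambda>j. Q * mu I i j) \<le> m"
        using b(2) mdec by (auto simp: le_fun_def)
      ultimately have "b + (\<lambda>j. Q * mu I i j) = m" using mmin by blast
      then show "b = m'" using mdec by (auto simp: fun_eq_iff)
    qed
    show "\<exists>i. \<exists>m'\<in>gens (ideal_pow I (l - Q)). m = m' + (\<lambda>j. Q * mu I i j)"
      using m'gen mdec by blast
  qed
qed

end
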